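(* Let $m\in\mathcal{S}(\Lambda)$ and $v\in V$. Then $T_vm$ is the unique element of $\mathcal{S}_v(\Lambda)$ with the following property: there exist an open neighborhood $B$ of $v$ in $V$ and an integer $N>0$ such that $T_vm(k,\lambda)=m(k,\lambda)$ for all $(k,\lambda)\in\mathbb{Z}\oplus\Lambda$ with $k>N$ and $\lambda/k\in B$. In particular $T_vm$ does not depend on the decomposition of $m$ used to define it.
   Context: $V$ finite-dimensional real vector space, $\Lambda\subset V$ full-rank lattice, $\Lambda_{\mathbb{Q}}=\Lambda\otimes\mathbb{Q}$. Rational polyhedron: finite intersection of half-spaces $\{v:\langle a,v\rangle\ge c\}$, $a\in\mathrm{Hom}(\Lambda,\mathbb{Z})\otimes\mathbb{Q}$, $c\in\mathbb{Q}$. $C_{P,\sigma}=\{(t,tv+\sigma):t>0,v\in P\}$, $[C_{P,\sigma}]$ its indicator on $\mathbb{Z}\oplus\Lambda$ (zero if $P=\emptyset$). Quasi-polynomials: algebra generated by polynomials and periodic functions. $\mathcal{S}(\Lambda)$: functions of the form $\sum_{P\in\mathcal{P}}\sum_{\sigma\in\Sigma_P}q_{P,\sigma}[C_{P,\sigma}]$ (a decomposition) with $\mathcal{P}$ rational polyhedra, $\Sigma_P\subset\Lambda_{\mathbb{Q}}$, $q_{P,\sigma}$ quasi-polynomial on $\mathbb{Z}\oplus\Lambda$, and $\{P+[0,1]\sigma\}$ locally finite. A cone is a rational polyhedron $w+K$ ($K$ a closed convex polyhedral cone) with apex set $w+(K\cap-K)$. $\mathcal{S}_v(\Lambda)$ is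 the subspace of $\mathcal{S}(\Lambda)$ of functions admitting a finite decomposition $\sum_{P,\sigma}q_{P,\sigma}[C_{P,\sigma}]$ in which each $P$ is a cone whose apex set contains $v$. For a polyhedron $P$, $T_vP$ is the tangent cone of $P$ at $v$ (the closure of $v+\mathbb{R}_{\ge0}(P-v)$) if $v\in P$, and $T_vP=\emptyset$ if $v\notin P$. Given a decomposition of $m$, $T_vm=\sum_{P,\sigma}q_{P,\sigma}[C_{T_vP,\sigma}]$ (a finite sum, since only finitely many $P$ contain $v$). *)

theory Defs
  imports "HOL-Analysis.Analysis"
begin

text \<open>V is modelled by a Euclidean space type 'v; linear functionals on V are
  represented via the inner product. Functions on Z (+) Lambda are functions
  int => 'v => complex, of which only the values on int x L matter.\<close>

definition full_rank_lattice :: "'v::euclidean_space set \<Rightarrow> bool" where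
  "full_rank_lattice L \<longleftrightarrow>
     (\<exists>B. independent B \<and> span B = UNIV \<and>
          L = {y. \<exists>c::'v \<Rightarrow> int. y = (\<Sum>b\<in>B. real_of_int (c b) *\<^sub>R b)})"

definition rat_lattice :: "'v::euclidean_space set \<Rightarrow> 'v set" where
  "rat_lattice L = {x. \<exists>n::nat. n > 0 \<and> real n *\<^sub>R x \<in> L}"

text \<open>Elements of Hom(Lambda,Z) tensor Q: functionals rational-valued on Lambda.\<close>
definition rational_functional :: "'v::euclidean_space set \<Rightarrow> 'v \<Rightarrow> bool" where
  "rational_functional L a \<longleftrightarrow> (\<forall>x\<in>L. a \<bullet> x \<in> \<rat>)"

definition rational_polyhedron :: "'v::euclidean_space set \<Rightarrow> 'v set \<Rightarrow> bool" where
  "rational_polyhedron L P \<longleftrightarrow>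
     (\<exists>H. finite H \<and> (\<forall>(a,c)\<in>H. rational_functional L a \<and> c \<in> \<rat>) \<and>
          P = {x. \<forall>(a,c)\<in>H. a \<bullet> x \<ge> c})"

inductive_set qpoly_gen :: "'v::euclidean_space set \<Rightarrow> (int \<Rightarrow> 'v \<Rightarrow> complex) set"
  for L :: "'v set" where
  const: "(\<lambda>k x. c) \<in> qpoly_gen L"
| coord_int: "(\<lambda>k x. of_int k) \<in> qpoly_gen L"
| coord_lin: "(\<lambda>k x. complex_of_real (a \<bullet> x)) \<in> qpoly_gen L"
| periodic: "(N::int) > 0 \<Longrightarrow>
     (\<forall>k j x y. x \<in> L \<longrightarrow> y \<in> L \<longrightarrow>
        f (k + N * j) (x + real_of_int N *\<^sub>R y) = f k x) \<Longrightarrow> f \<in> qpoly_gen L"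
| add: "f \<in> qpoly_gen L \<Longrightarrow> g \<in> qpoly_gen L \<Longrightarrow> (\<lambda>k x. f k x + g k x) \<in> qpoly_gen L"
| mult: "f \<in> qpoly_gen L \<Longrightarrow> g \<in> qpoly_gen L \<Longrightarrow> (\<lambda>k x. f k x * g k x) \<in> qpoly_gen L"

definition quasi_poly :: "'v::euclidean_space set \<Rightarrow> (int \<Rightarrow> 'v \<Rightarrow> complex) \<Rightarrow> bool" where
  "quasi_poly L q \<longleftrightarrow> (\<exists>g\<in>qpoly_gen L. \<forall>k. \<forall>x\<in>L. q k x = g k x)"

definition Ccone :: "'v::euclidean_space set \<Rightarrow> 'v \<Rightarrow> (real \<times> 'v) set" where
  "Ccone P \<sigma> = {(t, t *\<^sub>R y + \<sigma>) | t y. t > 0 \<and> y \<in> P}"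

definition Cind :: "'v::euclidean_space set \<Rightarrow> 'v \<Rightarrow> int \<Rightarrow> 'v \<Rightarrow> complex" where
  "Cind P \<sigma> k x = (if (real_of_int k, x) \<in> Ccone P \<sigma> then 1 else 0)"

definition seg_sum :: "'v::euclidean_space set \<Rightarrow> 'v \<Rightarrow> 'v set" where
  "seg_sum P \<sigma> = {y + s *\<^sub>R \<sigma> | y s. y \<in> P \<and> 0 \<le> s \<and> s \<le> 1}"

definition locally_finite_fam :: "('v::euclidean_space set \<times> 'v) set \<Rightarrow> bool" where
  "locally_finite_fam D \<longleftrightarrow>
     (\<forall>z. \<exists>U. open U \<and> z \<in> U \<and> finite {d\<in>D. seg_sum (fst d) (snd d) \<inter> U \<noteq> {}})"

definition is_decomp ::
  "'v::euclidean_space set \<Rightarrow> ('v set \<times> 'v) set \<Rightarrow> ('v set \<times> 'v \<Rightarrow> int \<Rightarrow> 'v \<Rightarrow> complex)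
     \<Rightarrow> (int \<Rightarrow> 'v \<Rightarrow> complex) \<Rightarrow> bool" where
  "is_decomp L D q m \<longleftrightarrow>
     (\<forall>d\<in>D. rational_polyhedron L (fst d) \<and> snd d \<in> rat_lattice L \<and> quasi_poly L (q d)) \<and>
     locally_finite_fam D \<and>
     (\<forall>k. \<forall>x\<in>L. m k x =
        (\<Sum>d\<in>{d\<in>D. Cind (fst d) (snd d) k x \<noteq> 0}. q d k x * Cind (fst d) (snd d) k x))"

definition in_S :: "'v::euclidean_space set \<Rightarrow> (int \<Rightarrow> 'v \<Rightarrow> complex) \<Rightarrow> bool" where
  "in_S L m \<longleftrightarrow> (\<exists>D q. is_decomp L D q m)"

definition cone_with_apex :: "'v::euclidean_space set \<Rightarrow> 'v set \<Rightarrow> 'v \<Rightarrow> bool" where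
  "cone_with_apex L P v \<longleftrightarrow> rational_polyhedron L P \<and>
     (\<exists>w K. cone K \<and> closed K \<and> convex K \<and> polyhedron K \<and>
        P = (\<lambda>x. w + x) ` K \<and> v \<in> (\<lambda>x. w + x) ` (K \<inter> uminus ` K))"

definition in_Sv :: "'v::euclidean_space set \<Rightarrow> 'v \<Rightarrow> (int \<Rightarrow> 'v \<Rightarrow> complex) \<Rightarrow> bool" where
  "in_Sv L v m \<longleftrightarrow>
     (\<exists>D q. finite D \<and> is_decomp L D q m \<and> (\<forall>d\<in>D. cone_with_apex L (fst d) v))"

definition tangent_cone :: "'v::real_normed_vector set \<Rightarrow> 'v \<Rightarrow> 'v set" where
  "tangent_cone P v =
     (if v \<in> P then closure ((\<lambda>x. v + x) ` {t *\<^sub>R (y - v) | t y. t \<ge> 0 \<and> y \<in> P}) else {})"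

definition Tv :: "('v::euclidean_space set \<times> 'v) set \<Rightarrow> ('v set \<times> 'v \<Rightarrow> int \<Rightarrow> 'v \<Rightarrow> complex)
     \<Rightarrow> 'v \<Rightarrow> int \<Rightarrow> 'v \<Rightarrow> complex" where
  "Tv D q v k x = (\<Sum>d\<in>{d\<in>D. v \<in> fst d}. q d k x * Cind (tangent_cone (fst d) v) (snd d) k x)"

definition agrees_near :: "'v::euclidean_space set \<Rightarrow> 'v \<Rightarrow> (int \<Rightarrow> 'v \<Rightarrow> complex)
     \<Rightarrow> (int \<Rightarrow> 'v \<Rightarrow> complex) \<Rightarrow> bool" where
  "agrees_near L v m m' \<longleftrightarrow>
     (\<exists>B N. open B \<and> v \<in> B \<and> (N::int) > 0 \<and>
        (\<forall>k. \<forall>x\<in>L. k > N \<and> (1 / real_of_int k) *\<^sub>R x \<in> B \<longrightarrow> m' k x = m k x))"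

end

theory Submission
  imports Defs
begin

lemma frl_basis:
  assumes "full_rank_lattice L"
  obtains B where "independent B" "span B = UNIV" "finite B"
    "L = {y. \<exists>c::'a::euclidean_space \<Rightarrow> int. y = (\<Sum>b\<in>B. real_of_int (c b) *\<^sub>R b)}"
proof -
  from assms obtain B where "independent B" "span B = UNIV"
    "L = {y. \<exists>c::'a::euclidean_space \<Rightarrow> int. y = (\<Sum>b\<in>B. real_of_int (c b) *\<^sub>R b)}"
    unfolding full_rank_lattice_def by blast
  then show ?thesis using that finiteI_independent by blast
qed

lemma frl_add:
  assumes "full_rank_lattice L" "x \<in> L" "y \<in> L" shows "x + y \<in> L"
proof -
  obtain B where B: "L = {y. \<exists>c::'a::euclidean_space \<Rightarrow> int. y = (\<Sum>b\<in>B. real_of_int (c b) *\<^sub>R b)}"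
    using assms(1) unfolding full_rank_lattice_def by blast
  obtain c1 c2 where "x = (\<Sum>b\<in>B. real_of_int (c1 b) *\<^sub>R b)" "y = (\<Sum>b\<in>B. real_of_int (c2 b) *\<^sub>R b)"
    using assms B by auto
  then have "x + y = (\<Sum>b\<in>B. real_of_int ((\<lambda>b. c1 b + c2 b) b) *\<^sub>R b)"
    by (simp add: sum.distrib scaleR_add_left)
  then show ?thesis unfolding B by (intro CollectI exI[of _ "\<lambda>b. c1 b + c2 b"])
qed

lemma frl_scale:
  assumes "full_rank_lattice L" "x \<in> L" shows "real_of_int z *\<^sub>R x \<in> L"
proof -
  obtain B where B: "L = {y. \<exists>c::'a::euclidean_space \<Rightarrow> int. y = (\<Sum>b\<in>B. real_of_int (c b) *\<^sub>R b)}"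
    using assms(1) unfolding full_rank_lattice_def by blast
  obtain c1 where "x = (\<Sum>b\<in>B. real_of_int (c1 b) *\<^sub>R b)"
    using assms B by auto
  then have "real_of_int z *\<^sub>R x = (\<Sum>b\<in>B. real_of_int ((\<lambda>b. z * c1 b) b) *\<^sub>R b)"
    by (simp add: scaleR_sum_right)
  then show ?thesis unfolding B by (intro CollectI exI[of _ "\<lambda>b. z * c1 b"])
qed

lemma frl_diff:
  assumes "full_rank_lattice L" "x \<in> L" "y \<in> L" shows "x - y \<in> L"
  using frl_add[OF assms(1,2) frl_scale[OF assms(1,3), of "-1"]] by simp

lemma frl_nat_scale:
  assumes "full_rank_lattice L" "x \<in> L" shows "real n *\<^sub>R x \<in> L"
  using frl_scale[OF assms, of "int n"] by simp

lemma ratl_add: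
  assumes "full_rank_lattice L" "x \<in> rat_lattice L" "y \<in> rat_lattice L"
  shows "x + y \<in> rat_lattice L"
proof -
  obtain n1 n2 :: nat where n: "n1 > 0" "real n1 *\<^sub>R x \<in> L" "n2 > 0" "real n2 *\<^sub>R y \<in> L"
    using assms unfolding rat_lattice_def by auto
  have "real (n1 * n2) *\<^sub>R (x + y) = real n2 *\<^sub>R (real n1 *\<^sub>R x) + real n1 *\<^sub>R (real n2 *\<^sub>R y)"
    by (simp add: algebra_simps)
  also have "\<dots> \<in> L" by (intro frl_add frl_nat_scale assms(1) n(2) n(4))
  finally show ?thesis unfolding rat_lattice_def using n by (intro CollectI exI[of _ "n1*n2"]) auto
qed

lemma ratl_scale:
  assumes "full_rank_lattice L" "x \<in> rat_lattice L" "t \<in> \<rat>"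
  shows "t *\<^sub>R x \<in> rat_lattice L"
proof -
  obtain n1 :: nat where n: "n1 > 0" "real n1 *\<^sub>R x \<in> L"
    using assms unfolding rat_lattice_def by auto
  obtain a b :: int where ab: "b > 0" "t = of_int a / of_int b" using Rats_cases'[OF assms(3)] by blast
  have "real (n1 * nat b) *\<^sub>R (t *\<^sub>R x) = real_of_int a *\<^sub>R (real n1 *\<^sub>R x)"
    using ab by (simp add: field_simps)
  also have "\<dots> \<in> L" using frl_scale[OF assms(1) n(2)] .
  finally show ?thesis unfolding rat_lattice_def using n ab by (intro CollectI exI[of _ "n1*nat b"]) auto
qed

lemma ratl_diff:
  assumes "full_rank_lattice L" "x \<in> rat_lattice L" "y \<in> rat_lattice L"
  shows "x - y \<in> rat_lattice L"
  using ratl_add[OF assms(1,2) ratl_scale[OF assms(1,3), of "-1"]] by simp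

lemma L_sub_ratl: "x \<in> L \<Longrightarrow> x \<in> rat_lattice L"
  unfolding rat_lattice_def by (intro CollectI exI[of _ 1]) auto

lemma ratfun_ratl:
  assumes "rational_functional L a" "x \<in> rat_lattice L" shows "a \<bullet> x \<in> \<rat>"
proof -
  obtain n :: nat where n: "n > 0" "real n *\<^sub>R x \<in> L"
    using assms unfolding rat_lattice_def by auto
  then have "a \<bullet> (real n *\<^sub>R x) \<in> \<rat>" using assms unfolding rational_functional_def by auto
  then have "(a \<bullet> (real n *\<^sub>R x)) / real n \<in> \<rat>" by (intro Rats_divide) auto
  then show ?thesis using n by simp
qed

lemma ratl_dense:
  fixes v :: "'a::euclidean_space"
  assumes L: "full_rank_lattice L" and e: "e > 0"
  shows "\<exists>u\<in>rat_lattice L. dist u v < e"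
proof -
  obtain B where Bi: "span B = UNIV" "finite B"
    and BL: "L = {y. \<exists>c::'a \<Rightarrow> int. y = (\<Sum>b\<in>B. real_of_int (c b) *\<^sub>R b)}"
    using L unfolding full_rank_lattice_def by (blast dest: finiteI_independent)
  obtain r where r: "v = (\<Sum>b\<in>B. r b *\<^sub>R b)"
  proof -
    have "v \<in> range (\<lambda>u. \<Sum>v\<in>B. u v *\<^sub>R v)" using span_finite[OF Bi(2)] Bi(1) by simp
    then show ?thesis using that by blast
  qed
  define S where "S = (\<Sum>b\<in>B. norm b)"
  have S0: "S \<ge> 0" unfolding S_def by (simp add: sum_nonneg)
  obtain n :: nat where n1: "real n > S / e" using reals_Archimedean2 by blast
  have "S / e \<ge> 0" using S0 e by simp
  then have n: "real n > S / e" "n > 0" using n1 by auto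
  define u where "u = (\<Sum>b\<in>B. (real_of_int \<lfloor>real n * r b\<rfloor> / real n) *\<^sub>R b)"
  have "real n *\<^sub>R u = (\<Sum>b\<in>B. real_of_int ((\<lambda>b. \<lfloor>real n * r b\<rfloor>) b) *\<^sub>R b)"
    unfolding u_def scaleR_sum_right using n by (intro sum.cong) auto
  then have "real n *\<^sub>R u \<in> L" unfolding BL by (intro CollectI exI[of _ "\<lambda>b. \<lfloor>real n * r b\<rfloor>"])
  then have uL: "u \<in> rat_lattice L" unfolding rat_lattice_def using n by blast
  have "v - u = (\<Sum>b\<in>B. (r b - real_of_int \<lfloor>real n * r b\<rfloor> / real n) *\<^sub>R b)"
    unfolding r u_def by (simp add: sum_subtractf scaleR_diff_left)
  then have "norm (v - u) \<le> (\<Sum>b\<in>B. (1 / real n) * norm b)"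
  proof (simp only:, intro sum_norm_le)
    fix b assume "b \<in> B"
    have f1: "real_of_int \<lfloor>real n * r b\<rfloor> \<le> real n * r b" "real n * r b < real_of_int \<lfloor>real n * r b\<rfloor> + 1"
      by linarith+
    have "\<bar>r b - real_of_int \<lfloor>real n * r b\<rfloor> / real n\<bar> \<le> 1 / real n"
    proof -
      have "real n * r b - real_of_int \<lfloor>real n * r b\<rfloor> \<le> 1" "0 \<le> real n * r b - real_of_int \<lfloor>real n * r b\<rfloor>"
        using f1 by linarith+
      then have "\<bar>real n * r b - real_of_int \<lfloor>real n * r b\<rfloor>\<bar> \<le> 1" by linarith
      moreover have "r b - real_of_int \<lfloor>real n * r b\<rfloor> / real n = (real n * r b - real_of_int \<lfloor>real n * r b\<rfloor>) / real n"
        using n by (simp add: field_simps)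
      ultimately show ?thesis using n by (simp add: abs_div_pos divide_right_mono)
    qed
    note hh = this
    then show "norm ((r b - real_of_int \<lfloor>real n * r b\<rfloor> / real n) *\<^sub>R b) \<le> 1 / real n * norm b"
      using mult_right_mono[OF hh norm_ge_zero[of b]] by simp
  qed
  also have "\<dots> = S / real n" unfolding S_def by (simp add: sum_divide_distrib)
  also have "\<dots> < e" using n e S_def by (simp add: field_simps)
  finally show ?thesis using uL by (auto simp: dist_norm norm_minus_commute)
qed

lemma inner_le_norms: "\<bar>a \<bullet> (x::'a::real_inner)\<bar> \<le> norm a * norm x"
  by (rule Cauchy_Schwarz_ineq2)

lemma rat_affine_dense:
  fixes F :: "('a::euclidean_space \<times> real) set"
  assumes L: "full_rank_lattice L" and fin: "finite F"
    and rat: "\<forall>(a,c)\<in>F. rational_functional L a \<and> c \<in> \<rat>"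
  shows "\<forall>v e. (\<forall>(a,c)\<in>F. a \<bullet> v = c) \<longrightarrow> e > 0 \<longrightarrow>
           (\<exists>u\<in>rat_lattice L. dist u v < e \<and> (\<forall>(a,c)\<in>F. a \<bullet> u = c))"
  using fin rat
proof (induction F rule: finite_induct)
  case empty
  then show ?case using ratl_dense[OF L] by simp
next
  case (insert x F)
  obtain a c where x: "x = (a, c)" by (cases x)
  have ra: "rational_functional L a" "c \<in> \<rat>" using insert.prems x by auto
  have IH: "\<forall>v e. (\<forall>(a,c)\<in>F. a \<bullet> v = c) \<longrightarrow> e > 0 \<longrightarrow>
           (\<exists>u\<in>rat_lattice L. dist u v < e \<and> (\<forall>(a,c)\<in>F. a \<bullet> u = c))"
    using insert.IH insert.prems by auto
  show ?case
  proof (intro allI impI)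
    fix v :: 'a and e :: real
    assume hv: "\<forall>(a',c')\<in>insert x F. a' \<bullet> v = c'" and e: "e > 0"
    have hvF: "\<forall>(a',c')\<in>F. a' \<bullet> v = c'" using hv by auto
    have hva: "a \<bullet> v = c" using hv x by auto
    define inW where "inW u \<longleftrightarrow> u \<in> rat_lattice L \<and> (\<forall>(a',c')\<in>F. a' \<bullet> u = c')" for u
    show "\<exists>u\<in>rat_lattice L. dist u v < e \<and> (\<forall>(a',c')\<in>insert x F. a' \<bullet> u = c')"
    proof (cases "\<exists>p1 p2. inW p1 \<and> inW p2 \<and> a \<bullet> p1 \<noteq> a \<bullet> p2")
      case True
      then obtain p1 p2 where p: "inW p1" "inW p2" "a \<bullet> p1 \<noteq> a \<bullet> p2" by blast
      define d where "d = p2 - p1"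
      have ad: "a \<bullet> d \<noteq> 0" using p(3) unfolding d_def by (simp add: inner_diff_right)
      define \<kappa> where "\<kappa> = 1 + norm a * norm d / \<bar>a \<bullet> d\<bar>"
      have k1: "\<kappa> \<ge> 1" unfolding \<kappa>_def by simp
      obtain p where pL: "p \<in> rat_lattice L" and pd: "dist p v < e / \<kappa>"
        and pF: "\<forall>(a',c')\<in>F. a' \<bullet> p = c'"
      proof -
        have "e / \<kappa> > 0" using e k1 by simp
        then show ?thesis using IH hvF that by blast
      qed
      define t where "t = (c - a \<bullet> p) / (a \<bullet> d)"
      define u where "u = p + t *\<^sub>R d"
      have au: "a \<bullet> u = c" unfolding u_def t_def using ad by (simp add: inner_add_right)
      have Fu: "\<forall>(a',c')\<in>F. a' \<bullet> u = c'"
      proof (intro ballI, clarify)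
        fix a' c' assume "(a', c') \<in> F"
        then have "a' \<bullet> p = c'" "a' \<bullet> p1 = c'" "a' \<bullet> p2 = c'" using pF p unfolding inW_def by auto
        then show "a' \<bullet> u = c'" unfolding u_def d_def by (simp add: inner_add_right inner_diff_right)
      qed
      have p12: "p1 \<in> rat_lattice L" "p2 \<in> rat_lattice L" using p unfolding inW_def by auto
      have dL: "d \<in> rat_lattice L" unfolding d_def by (rule ratl_diff[OF L p12(2) p12(1)])
      have tQ: "t \<in> \<rat>" unfolding t_def
        using ra ratfun_ratl[OF ra(1) pL] ratfun_ratl[OF ra(1) dL] by (intro Rats_divide Rats_diff) auto
      have uL: "u \<in> rat_lattice L" unfolding u_def by (rule ratl_add[OF L pL ratl_scale[OF L dL tQ]])
      have "\<bar>t\<bar> = \<bar>a \<bullet> (v - p)\<bar> / \<bar>a \<bullet> d\<bar>" unfolding t_def using hva by (simp add: inner_diff_right)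
      also have "\<dots> \<le> norm a * norm (v - p) / \<bar>a \<bullet> d\<bar>"
        using ad by (intro divide_right_mono inner_le_norms) auto
      finally have tb: "\<bar>t\<bar> \<le> norm a * dist p v / \<bar>a \<bullet> d\<bar>" by (simp add: dist_norm norm_minus_commute)
      have "dist u v \<le> dist p v + \<bar>t\<bar> * norm d"
      proof -
        have "p + t *\<^sub>R d - v = (p - v) + t *\<^sub>R d" by simp
        then have "norm (p + t *\<^sub>R d - v) \<le> norm (p - v) + norm (t *\<^sub>R d)"
          using norm_triangle_ineq by metis
        then show ?thesis unfolding u_def dist_norm by simp
      qed
      also have "\<dots> \<le> dist p v + norm a * dist p v / \<bar>a \<bullet> d\<bar> * norm d"
        using tb by (intro add_left_mono mult_right_mono) auto
      also have "\<dots> = dist p v * \<kappa>" unfolding \<kappa>_def by (simp add: field_simps)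
      also have "\<dots> < e" using pd k1 by (simp add: field_simps)
      finally show ?thesis using uL au Fu x by auto
    next
      case False
      then have cst: "\<And>p1 p2. inW p1 \<Longrightarrow> inW p2 \<Longrightarrow> a \<bullet> p1 = a \<bullet> p2" by blast
      obtain p where pL: "p \<in> rat_lattice L" and pd: "dist p v < e"
        and pF: "\<forall>(a',c')\<in>F. a' \<bullet> p = c'"
        using IH hvF e by blast
      have ap: "a \<bullet> p = c"
      proof (rule ccontr)
        assume ne: "a \<bullet> p \<noteq> c"
        define \<delta> where "\<delta> = \<bar>a \<bullet> p - c\<bar> / (norm a + 1)"
        have \<delta>: "\<delta> > 0" using ne unfolding \<delta>_def by (intro divide_pos_pos) (auto intro: add_nonneg_pos)
        obtain p' where p'L: "p' \<in> rat_lattice L" and p'd: "dist p' v < \<delta>"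
          and p'F: "\<forall>(a',c')\<in>F. a' \<bullet> p' = c'"
          using IH hvF \<delta> by blast
        have "a \<bullet> p' = a \<bullet> p" using cst p'L p'F pL pF unfolding inW_def by blast
        then have "\<bar>a \<bullet> p - c\<bar> = \<bar>a \<bullet> (p' - v)\<bar>" using hva by (simp add: inner_diff_right)
        also have "\<dots> \<le> norm a * dist p' v" by (simp add: dist_norm inner_le_norms)
        also have "\<dots> \<le> norm a * \<delta>" using p'd by (simp add: mult_left_mono)
        also have "\<dots> < (norm a + 1) * \<delta>" using \<delta> by simp
        also have "\<dots> = \<bar>a \<bullet> p - c\<bar>"
        proof -
          have "norm a + 1 \<noteq> 0" using norm_ge_zero[of a] by linarith
          then show ?thesis by (simp add: \<delta>_def)
        qed
        finally show False by simp
      qed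
      then show ?thesis using pL pd pF x by auto
    qed
  qed
qed

lemma qp_ray:
  assumes L: "full_rank_lattice L" and g: "g \<in> qpoly_gen L"
  shows "\<exists>N>0. \<forall>m y0 k x. y0 \<in> L \<longrightarrow> x \<in> L \<longrightarrow>
     (\<exists>p. \<forall>j::nat. g (k + int j * (N*m)) (x + real_of_int (int j * N) *\<^sub>R y0) = poly p (of_nat j))"
  using g
proof induction
  case (const c)
  show ?case by (rule exI[of _ 1]) (auto intro!: exI[of _ "[:c:]"])
next
  case coord_int
  show ?case
  proof (rule exI[of _ 1], intro conjI allI impI)
    fix m y0 k and x :: 'a
    show "\<exists>p. \<forall>j::nat. of_int (k + int j * (1*m)) = poly p (of_nat j)"
      by (rule exI[of _ "[:of_int k, of_int m:]"]) (simp add: algebra_simps)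
  qed simp
next
  case (coord_lin a)
  show ?case
  proof (rule exI[of _ 1], intro conjI allI impI)
    fix m y0 k and x :: 'a
    show "\<exists>p. \<forall>j::nat. complex_of_real (a \<bullet> (x + real_of_int (int j * 1) *\<^sub>R y0)) = poly p (of_nat j)"
      by (rule exI[of _ "[:complex_of_real (a \<bullet> x), complex_of_real (a \<bullet> y0):]"])
        (simp add: algebra_simps inner_add_right)
  qed simp
next
  case (periodic N f)
  show ?case
  proof (rule exI[of _ N], intro conjI allI impI)
    fix m y0 k x assume y0: "y0 \<in> L" and x: "x \<in> L"
    show "\<exists>p. \<forall>j::nat. f (k + int j * (N*m)) (x + real_of_int (int j * N) *\<^sub>R y0) = poly p (of_nat j)"
    proof (rule exI[of _ "[:f k x:]"], intro allI)
      fix j :: nat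
      have yL: "real_of_int (int j) *\<^sub>R y0 \<in> L" by (rule frl_scale[OF L y0])
      have H: "f (k + N * (int j * m)) (x + real_of_int N *\<^sub>R (real_of_int (int j) *\<^sub>R y0)) = f k x"
        using periodic.hyps(2) x yL by blast
      have E1: "k + N * (int j * m) = k + int j * (N*m)" by (simp add: algebra_simps)
      have E2: "x + real_of_int N *\<^sub>R (real_of_int (int j) *\<^sub>R y0) = x + real_of_int (int j * N) *\<^sub>R y0"
        by (simp add: algebra_simps)
      show "f (k + int j * (N*m)) (x + real_of_int (int j * N) *\<^sub>R y0) = poly [:f k x:] (of_nat j)"
        using H[unfolded E1 E2] by simp
    qed
  qed (use periodic.hyps(1) in simp)
next
  case (add f g)
  obtain N1 where N1: "N1 > 0" "\<forall>m y0 k x. y0 \<in> L \<longrightarrow> x \<in> L \<longrightarrow>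
     (\<exists>p. \<forall>j::nat. f (k + int j * (N1*m)) (x + real_of_int (int j * N1) *\<^sub>R y0) = poly p (of_nat j))"
    using add.IH(1) by blast
  obtain N2 where N2: "N2 > 0" "\<forall>m y0 k x. y0 \<in> L \<longrightarrow> x \<in> L \<longrightarrow>
     (\<exists>p. \<forall>j::nat. g (k + int j * (N2*m)) (x + real_of_int (int j * N2) *\<^sub>R y0) = poly p (of_nat j))"
    using add.IH(2) by blast
  show ?case
  proof (rule exI[of _ "N1*N2"], intro conjI allI impI)
    fix m y0 k x assume y0: "y0 \<in> L" and x: "x \<in> L"
    have y1: "real_of_int N2 *\<^sub>R y0 \<in> L" "real_of_int N1 *\<^sub>R y0 \<in> L" using frl_scale[OF L y0] by auto
    obtain p1 where p1: "\<forall>j::nat. f (k + int j * (N1*(N2*m))) (x + real_of_int (int j * N1) *\<^sub>R (real_of_int N2 *\<^sub>R y0)) = poly p1 (of_nat j)"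
      using N1(2) y1 x by blast
    obtain p2 where p2: "\<forall>j::nat. g (k + int j * (N2*(N1*m))) (x + real_of_int (int j * N2) *\<^sub>R (real_of_int N1 *\<^sub>R y0)) = poly p2 (of_nat j)"
      using N2(2) y1 x by blast
    show "\<exists>p. \<forall>j::nat. f (k + int j * (N1 * N2 * m)) (x + real_of_int (int j * (N1 * N2)) *\<^sub>R y0) +
                       g (k + int j * (N1 * N2 * m)) (x + real_of_int (int j * (N1 * N2)) *\<^sub>R y0) = poly p (of_nat j)"
    proof (rule exI[of _ "p1 + p2"], intro allI)
      fix j :: nat
      have e1: "k + int j * (N1*(N2*m)) = k + int j * (N1 * N2 * m)" "k + int j * (N2*(N1*m)) = k + int j * (N1 * N2 * m)"
        by (simp_all add: algebra_simps)
      have e2: "x + real_of_int (int j * N1) *\<^sub>R (real_of_int N2 *\<^sub>R y0) = x + real_of_int (int j * (N1 * N2)) *\<^sub>R y0"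
        "x + real_of_int (int j * N2) *\<^sub>R (real_of_int N1 *\<^sub>R y0) = x + real_of_int (int j * (N1 * N2)) *\<^sub>R y0"
        by (simp_all add: algebra_simps)
      show "f (k + int j * (N1 * N2 * m)) (x + real_of_int (int j * (N1 * N2)) *\<^sub>R y0) +
            g (k + int j * (N1 * N2 * m)) (x + real_of_int (int j * (N1 * N2)) *\<^sub>R y0) = poly (p1 + p2) (of_nat j)"
        using p1[rule_format, of j, unfolded e1 e2] p2[rule_format, of j, unfolded e1 e2] by (simp only: poly_add)
    qed
  qed (use N1 N2 in simp)
next
  case (mult f g)
  obtain N1 where N1: "N1 > 0" "\<forall>m y0 k x. y0 \<in> L \<longrightarrow> x \<in> L \<longrightarrow>
     (\<exists>p. \<forall>j::nat. f (k + int j * (N1*m)) (x + real_of_int (int j * N1) *\<^sub>R y0) = poly p (of_nat j))"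
    using mult.IH(1) by blast
  obtain N2 where N2: "N2 > 0" "\<forall>m y0 k x. y0 \<in> L \<longrightarrow> x \<in> L \<longrightarrow>
     (\<exists>p. \<forall>j::nat. g (k + int j * (N2*m)) (x + real_of_int (int j * N2) *\<^sub>R y0) = poly p (of_nat j))"
    using mult.IH(2) by blast
  show ?case
  proof (rule exI[of _ "N1*N2"], intro conjI allI impI)
    fix m y0 k x assume y0: "y0 \<in> L" and x: "x \<in> L"
    have y1: "real_of_int N2 *\<^sub>R y0 \<in> L" "real_of_int N1 *\<^sub>R y0 \<in> L" using frl_scale[OF L y0] by auto
    obtain p1 where p1: "\<forall>j::nat. f (k + int j * (N1*(N2*m))) (x + real_of_int (int j * N1) *\<^sub>R (real_of_int N2 *\<^sub>R y0)) = poly p1 (of_nat j)"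
      using N1(2) y1 x by blast
    obtain p2 where p2: "\<forall>j::nat. g (k + int j * (N2*(N1*m))) (x + real_of_int (int j * N2) *\<^sub>R (real_of_int N1 *\<^sub>R y0)) = poly p2 (of_nat j)"
      using N2(2) y1 x by blast
    show "\<exists>p. \<forall>j::nat. f (k + int j * (N1 * N2 * m)) (x + real_of_int (int j * (N1 * N2)) *\<^sub>R y0) *
                       g (k + int j * (N1 * N2 * m)) (x + real_of_int (int j * (N1 * N2)) *\<^sub>R y0) = poly p (of_nat j)"
    proof (rule exI[of _ "p1 * p2"], intro allI)
      fix j :: nat
      have e1: "k + int j * (N1*(N2*m)) = k + int j * (N1 * N2 * m)" "k + int j * (N2*(N1*m)) = k + int j * (N1 * N2 * m)"
        by (simp_all add: algebra_simps)
      have e2: "x + real_of_int (int j * N1) *\<^sub>R (real_of_int N2 *\<^sub>R y0) = x + real_of_int (int j * (N1 * N2)) *\<^sub>R y0"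
        "x + real_of_int (int j * N2) *\<^sub>R (real_of_int N1 *\<^sub>R y0) = x + real_of_int (int j * (N1 * N2)) *\<^sub>R y0"
        by (simp_all add: algebra_simps)
      show "f (k + int j * (N1 * N2 * m)) (x + real_of_int (int j * (N1 * N2)) *\<^sub>R y0) *
            g (k + int j * (N1 * N2 * m)) (x + real_of_int (int j * (N1 * N2)) *\<^sub>R y0) = poly (p1 * p2) (of_nat j)"
        using p1[rule_format, of j, unfolded e1 e2] p2[rule_format, of j, unfolded e1 e2] by (simp only: poly_mult)
    qed
  qed (use N1 N2 in simp)
qed

definition PH :: "('a::real_inner \<times> real) set \<Rightarrow> 'a set" where
  "PH H = {x. \<forall>(a,c)\<in>H. c \<le> a \<bullet> x}"

definition tight :: "('a::real_inner \<times> real) set \<Rightarrow> 'a \<Rightarrow> ('a \<times> real) set" where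
  "tight H v = {(a,c)\<in>H. a \<bullet> v = c}"

lemma finite_tight: "finite H \<Longrightarrow> finite (tight H v)"
  unfolding tight_def by (rule finite_subset[of _ H]) auto

lemma finite_min:
  assumes "finite S" "\<forall>s\<in>S. \<exists>r>0. Q s r"
    "\<And>s r r'. Q s r \<Longrightarrow> 0 < r' \<Longrightarrow> r' \<le> r \<Longrightarrow> Q s r'"
  shows "\<exists>r>(0::real). \<forall>s\<in>S. Q s r"
  using assms(1,2)
proof (induction S rule: finite_induct)
  case empty
  then show ?case by (auto intro: exI[of _ 1])
next
  case (insert s S)
  obtain r1 where r1: "r1 > 0" "\<forall>s\<in>S. Q s r1" using insert by auto
  obtain r2 where r2: "r2 > 0" "Q s r2" using insert.prems by auto
  have "\<forall>s'\<in>insert s S. Q s' (min r1 r2)"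
    using r1 r2 assms(3) by auto
  then show ?case using r1 r2 by (intro exI[of _ "min r1 r2"]) auto
qed

lemma local_nontight:
  assumes "finite H"
  shows "\<exists>r>0. \<forall>y. dist y v < r \<longrightarrow> (\<forall>(a,c)\<in>H. c < a \<bullet> v \<longrightarrow> c < a \<bullet> y)"
proof -
  have "\<exists>r>0. \<forall>h\<in>H. (\<lambda>h r. \<forall>y. dist y v < r \<longrightarrow> (c_of h < a_of h \<bullet> v \<longrightarrow> c_of h < a_of h \<bullet> y)) h r"
    if "a_of = fst" "c_of = snd" for a_of c_of
  proof (rule finite_min[OF assms])
    show "\<forall>h\<in>H. \<exists>r>0. \<forall>y. dist y v < r \<longrightarrow> (c_of h < a_of h \<bullet> v \<longrightarrow> c_of h < a_of h \<bullet> y)"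
    proof
      fix h assume "h \<in> H"
      define a c where "a = a_of h" and "c = c_of h"
      show "\<exists>r>0. \<forall>y. dist y v < r \<longrightarrow> (c_of h < a_of h \<bullet> v \<longrightarrow> c_of h < a_of h \<bullet> y)"
      proof (cases "c < a \<bullet> v")
        case False
        then show ?thesis unfolding a_def c_def by (auto intro: exI[of _ 1])
      next
        case True
        define r where "r = (a \<bullet> v - c) / (norm a + 1)"
        have na: "norm a + 1 > 0" using norm_ge_zero[of a] by linarith
        have r: "r > 0" unfolding r_def using True na by simp
        have rr: "norm a * r < a \<bullet> v - c"
        proof -
          have "norm a * r < (norm a + 1) * r" using r by simp
          also have "\<dots> = a \<bullet> v - c" unfolding r_def using na by simp
          finally show ?thesis .
        qed
        have "\<forall>y. dist y v < r \<longrightarrow> c < a \<bullet> y"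
        proof (intro allI impI)
          fix y assume "dist y v < r"
          then have "\<bar>a \<bullet> (y - v)\<bar> \<le> norm a * r"
            using inner_le_norms[of a "y - v"] mult_left_mono[of "norm (y-v)" r "norm a"]
            by (auto simp: dist_norm)
          then show "c < a \<bullet> y" using rr by (simp add: inner_diff_right abs_le_iff)
        qed
        then show ?thesis using r unfolding a_def c_def by auto
      qed
    qed
  qed auto
  from this[OF refl refl] show ?thesis by (auto simp: case_prod_beta)
qed

lemma local_agree:
  assumes "finite H" "v \<in> PH H"
  shows "\<exists>r>0. \<forall>y. dist y v < r \<longrightarrow> (y \<in> PH H \<longleftrightarrow> y \<in> PH (tight H v))"
proof -
  obtain r where r: "r > 0" "\<forall>y. dist y v < r \<longrightarrow> (\<forall>(a,c)\<in>H. c < a \<bullet> v \<longrightarrow> c < a \<bullet> y)"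
    using local_nontight[OF assms(1)] by blast
  have "y \<in> PH H \<longleftrightarrow> y \<in> PH (tight H v)" if "dist y v < r" for y
  proof
    assume "y \<in> PH H" then show "y \<in> PH (tight H v)" unfolding PH_def tight_def by auto
  next
    assume y: "y \<in> PH (tight H v)"
    show "y \<in> PH H" unfolding PH_def
    proof (clarify)
      fix a c assume ac: "(a, c) \<in> H"
      have "c \<le> a \<bullet> v" using assms(2) ac unfolding PH_def by auto
      then consider "c = a \<bullet> v" | "c < a \<bullet> v" by linarith
      then show "c \<le> a \<bullet> y"
      proof cases
        case 1 then show ?thesis using y ac unfolding PH_def tight_def by auto
      next
        case 2 then show ?thesis using r that ac by fastforce
      qed
    qed
  qed
  then show ?thesis using r by blast
qed

lemma PH_tight_ray:
  assumes "x \<in> PH (tight H v)" "t \<ge> 0"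
  shows "v + t *\<^sub>R (x - v) \<in> PH (tight H v)"
  unfolding PH_def
proof (clarify)
  fix a c assume "(a, c) \<in> tight H v"
  then have "a \<bullet> v = c" "c \<le> a \<bullet> x" using assms unfolding PH_def tight_def by auto
  then have "c \<le> c + t * (a \<bullet> x - c)" using assms(2) by simp
  then show "c \<le> a \<bullet> (v + t *\<^sub>R (x - v))" using \<open>a \<bullet> v = c\<close>
    by (simp add: inner_add_right inner_diff_right algebra_simps)
qed

lemma shrink:
  assumes "finite H" "v \<in> PH H" "x \<in> PH (tight H v)"
  shows "\<exists>\<epsilon>>0. v + \<epsilon> *\<^sub>R (x - v) \<in> PH H"
proof -
  obtain r where r: "r > 0" "\<forall>y. dist y v < r \<longrightarrow> (y \<in> PH H \<longleftrightarrow> y \<in> PH (tight H v))"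
    using local_agree[OF assms(1,2)] by blast
  define \<epsilon> where "\<epsilon> = r / (2 * (norm (x - v) + 1))"
  have n1: "norm (x - v) + 1 > 0" using norm_ge_zero[of "x - v"] by linarith
  have e: "\<epsilon> > 0" unfolding \<epsilon>_def using r n1 by simp
  have "dist (v + \<epsilon> *\<^sub>R (x - v)) v = \<epsilon> * norm (x - v)" using e by (simp add: dist_norm)
  also have "\<dots> < \<epsilon> * (2 * (norm (x - v) + 1))"
  proof (rule mult_strict_left_mono)
    show "norm (x - v) < 2 * (norm (x - v) + 1)" by (smt (verit) norm_ge_zero)
  qed (use e in simp)
  also have "\<dots> = r" unfolding \<epsilon>_def using n1 by simp
  finally have "v + \<epsilon> *\<^sub>R (x - v) \<in> PH H"
    using r PH_tight_ray[OF assms(3), of \<epsilon>] e by auto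
  then show ?thesis using e by blast
qed

lemma closed_PH: "finite H \<Longrightarrow> closed (PH H)"
proof -
  assume "finite H"
  have "PH H = (\<Inter>h\<in>H. {x. snd h \<le> fst h \<bullet> x})" unfolding PH_def by force
  then show ?thesis by (auto intro!: closed_INT closed_halfspace_ge)
qed

lemma tangent_eq:
  assumes "finite H" "v \<in> PH H"
  shows "tangent_cone (PH H) v = PH (tight H v)"
proof -
  define C0 where "C0 = (\<lambda>x. v + x) ` {t *\<^sub>R (y - v) | t y. t \<ge> 0 \<and> y \<in> PH H}"
  have tc: "tangent_cone (PH H) v = closure C0" unfolding tangent_cone_def C0_def using assms(2) by simp
  have sub: "C0 \<subseteq> PH (tight H v)"
  proof
    fix z assume "z \<in> C0"
    then obtain t y where z: "z = v + t *\<^sub>R (y - v)" "t \<ge> 0" "y \<in> PH H" unfolding C0_def by auto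
    have "y \<in> PH (tight H v)" using z(3) unfolding PH_def tight_def by auto
    then show "z \<in> PH (tight H v)" using PH_tight_ray z by auto
  qed
  have sup: "PH (tight H v) \<subseteq> C0"
  proof
    fix x assume x: "x \<in> PH (tight H v)"
    obtain \<epsilon> where e: "\<epsilon> > 0" "v + \<epsilon> *\<^sub>R (x - v) \<in> PH H" using shrink[OF assms x] by blast
    have "x = v + (1/\<epsilon>) *\<^sub>R ((v + \<epsilon> *\<^sub>R (x - v)) - v)" using e by simp
    have "x - v \<in> {t *\<^sub>R (y - v) | t y. t \<ge> 0 \<and> y \<in> PH H}"
      using e by (auto intro!: exI[of _ "1/\<epsilon>"] exI[of _ "v + \<epsilon> *\<^sub>R (x - v)"])
    then show "x \<in> C0" unfolding C0_def by (intro image_eqI[of x _ "x - v"]) auto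
  qed
  have "closure C0 \<subseteq> PH (tight H v)"
    using closure_minimal[OF sub closed_PH[OF finite_tight[OF assms(1)]]] .
  moreover have "PH (tight H v) \<subseteq> closure C0" using sup closure_subset by blast
  ultimately show ?thesis using tc by blast
qed

lemma outside:
  assumes "finite H" "v \<notin> PH H"
  shows "\<exists>r>0. \<forall>y. dist y v < r \<longrightarrow> y \<notin> PH H"
proof -
  have "open (- PH H)" using closed_PH[OF assms(1)] by (simp add: open_Compl)
  then obtain r where "r > 0" "ball v r \<subseteq> - PH H" using assms(2) open_contains_ball by blast
  moreover have "\<forall>y. dist y v < r \<longrightarrow> y \<notin> PH H"
  proof (intro allI impI)
    fix y assume "dist y v < r"
    then have "y \<in> ball v r" by (simp add: dist_commute)
    then show "y \<notin> PH H" using \<open>ball v r \<subseteq> - PH H\<close> by blast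
  qed
  ultimately show ?thesis by blast
qed

lemma ratpoly_PH:
  assumes "rational_polyhedron L P"
  obtains H where "finite H" "\<forall>(a,c)\<in>H. rational_functional L a \<and> c \<in> \<rat>" "P = PH H"
proof -
  obtain H where "finite H" "\<forall>(a,c)\<in>H. rational_functional L a \<and> c \<in> \<rat>"
    "P = {x. \<forall>(a,c)\<in>H. a \<bullet> x \<ge> c}"
    using assms unfolding rational_polyhedron_def by blast
  moreover have "{x. \<forall>(a,c)\<in>H. a \<bullet> x \<ge> c} = PH H" unfolding PH_def by simp
  ultimately show ?thesis using that by auto
qed

lemma cone_convex_add:
  assumes "cone K" "convex K" "a \<in> K" "b \<in> K" shows "a + b \<in> K"
proof -
  have "(1/2) *\<^sub>R a + (1/2) *\<^sub>R b \<in> K" using convexD[OF assms(2) assms(3,4), of "1/2" "1/2"] by simp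
  then have "2 *\<^sub>R ((1/2) *\<^sub>R a + (1/2) *\<^sub>R b) \<in> K" using assms(1) unfolding cone_def by auto
  then show ?thesis by (simp add: scaleR_add_right)
qed

lemma apex_ray:
  assumes "cone K" "convex K" "k0 \<in> K" "- k0 \<in> K" "z \<in> (\<lambda>x. w + x) ` K" "s \<ge> 0"
  shows "(w + k0) + s *\<^sub>R (z - (w + k0)) \<in> (\<lambda>x. w + x) ` K"
proof -
  obtain k1 where k1: "k1 \<in> K" "z = w + k1" using assms(5) by auto
  have eq: "(w + k0) + s *\<^sub>R (z - (w + k0)) = w + (s *\<^sub>R k1 + (1 - s) *\<^sub>R k0)"
    using k1 by (simp add: algebra_simps)
  have "s *\<^sub>R k1 + (1 - s) *\<^sub>R k0 \<in> K"
  proof (cases "s \<le> 1")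
    case True
    then show ?thesis using convexD[OF assms(2) k1(1) assms(3), of s "1 - s"] assms(6) by simp
  next
    case False
    have "s *\<^sub>R k1 \<in> K" using assms(1) k1(1) assms(6) unfolding cone_def by auto
    moreover have "(s - 1) *\<^sub>R (- k0) \<in> K" using assms(1,4) False unfolding cone_def by auto
    ultimately have "s *\<^sub>R k1 + (s - 1) *\<^sub>R (- k0) \<in> K" by (rule cone_convex_add[OF assms(1,2)])
    moreover have "s *\<^sub>R k1 + (s - 1) *\<^sub>R (- k0) = s *\<^sub>R k1 + (1 - s) *\<^sub>R k0" by (simp add: algebra_simps)
    ultimately show ?thesis by metis
  qed
  then show ?thesis unfolding eq by blast
qed

lemma cone_tight:
  assumes "cone_with_apex L P v"
  shows "\<exists>T. finite T \<and> (\<forall>(a,c)\<in>T. rational_functional L a \<and> c \<in> \<rat> \<and> a \<bullet> v = c) \<and> P = PH T"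
proof -
  have "rational_polyhedron L P" using assms unfolding cone_with_apex_def by blast
  then obtain H where H: "finite H" "\<forall>(a,c)\<in>H. rational_functional L a \<and> c \<in> \<rat>" "P = PH H"
    by (rule ratpoly_PH)
  obtain w K where K: "cone K" "convex K" "P = (\<lambda>x. w + x) ` K" "v \<in> (\<lambda>x. w + x) ` (K \<inter> uminus ` K)"
    using assms unfolding cone_with_apex_def by blast
  obtain k0 where k0: "k0 \<in> K" "- k0 \<in> K" "v = w + k0" using K(4) by auto
  have vP: "v \<in> PH H" using k0 K(3) H(3) by auto
  have "PH (tight H v) \<subseteq> PH H"
  proof
    fix x assume x: "x \<in> PH (tight H v)"
    obtain \<epsilon> where e: "\<epsilon> > 0" "v + \<epsilon> *\<^sub>R (x - v) \<in> PH H" using shrink[OF H(1) vP x] by blast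
    have "v + (1/\<epsilon>) *\<^sub>R ((v + \<epsilon> *\<^sub>R (x - v)) - v) \<in> (\<lambda>x. w + x) ` K"
      using apex_ray[OF K(1,2) k0(1,2), of "v + \<epsilon> *\<^sub>R (x - v)" w "1/\<epsilon>"] e K(3) H(3) k0(3) by auto
    moreover have "v + (1/\<epsilon>) *\<^sub>R ((v + \<epsilon> *\<^sub>R (x - v)) - v) = x" using e by simp
    ultimately show "x \<in> PH H" using K(3) H(3) by simp
  qed
  moreover have "PH H \<subseteq> PH (tight H v)" unfolding PH_def tight_def by auto
  ultimately have "P = PH (tight H v)" using H(3) by blast
  moreover have "\<forall>(a,c)\<in>tight H v. rational_functional L a \<and> c \<in> \<rat> \<and> a \<bullet> v = c"
    using H(2) unfolding tight_def by auto
  ultimately show ?thesis using finite_tight[OF H(1)] by blast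
qed

lemma tight_cone:
  assumes "finite T" "\<forall>(a,c)\<in>T. rational_functional L a \<and> c \<in> \<rat> \<and> a \<bullet> v = c"
  shows "cone_with_apex L (PH T) v"
proof -
  have rp: "rational_polyhedron L (PH T)"
    unfolding rational_polyhedron_def PH_def using assms by (intro exI[of _ T]) auto
  define K where "K = (\<Inter>h\<in>T. {d. fst h \<bullet> d \<ge> 0})"
  have cK: "cone K" unfolding K_def cone_def by (auto simp: inner_scaleR_right)
  have clK: "closed K" unfolding K_def by (auto intro!: closed_INT closed_halfspace_ge)
  have cvK: "convex K" unfolding K_def by (auto intro!: convex_INT convex_halfspace_ge)
  have pK: "polyhedron K" unfolding K_def using assms(1)
    by (intro polyhedron_Inter) (auto intro: polyhedron_halfspace_ge)
  have img: "PH T = (\<lambda>x. v + x) ` K"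
  proof
    show "PH T \<subseteq> (\<lambda>x. v + x) ` K"
    proof
      fix x assume x: "x \<in> PH T"
      have "x - v \<in> K" unfolding K_def
      proof (clarify)
        fix a c assume "(a, c) \<in> T"
        then show "0 \<le> fst (a, c) \<bullet> (x - v)" using x assms(2) unfolding PH_def by (auto simp: inner_diff_right)
      qed
      then show "x \<in> (\<lambda>x. v + x) ` K" by (intro image_eqI[of x _ "x - v"]) auto
    qed
  next
    show "(\<lambda>x. v + x) ` K \<subseteq> PH T"
    proof clarify
      fix d assume d: "d \<in> K"
      show "v + d \<in> PH T" unfolding PH_def
      proof clarify
        fix a c assume ac: "(a, c) \<in> T"
        then have "0 \<le> a \<bullet> d" using d unfolding K_def by auto
        then show "c \<le> a \<bullet> (v + d)" using ac assms(2) by (auto simp: inner_add_right)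
      qed
    qed
  qed
  have "0 \<in> K" unfolding K_def by simp
  then have "v \<in> (\<lambda>x. v + x) ` (K \<inter> uminus ` K)" by (intro image_eqI[of v _ 0]) auto
  then show ?thesis unfolding cone_with_apex_def using rp cK clK cvK pK img
    by (intro conjI exI[of _ v] exI[of _ K])
qed

lemma Cind_char:
  "Cind P \<sigma> k x = (if 0 < k \<and> (1 / real_of_int k) *\<^sub>R (x - \<sigma>) \<in> P then 1 else 0)"
proof -
  have "(real_of_int k, x) \<in> Ccone P \<sigma> \<longleftrightarrow> 0 < k \<and> (1 / real_of_int k) *\<^sub>R (x - \<sigma>) \<in> P"
  proof
    assume "(real_of_int k, x) \<in> Ccone P \<sigma>"
    then obtain t y where "real_of_int k = t" "x = t *\<^sub>R y + \<sigma>" "t > 0" "y \<in> P"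
      unfolding Ccone_def by auto
    then show "0 < k \<and> (1 / real_of_int k) *\<^sub>R (x - \<sigma>) \<in> P" by auto
  next
    assume h: "0 < k \<and> (1 / real_of_int k) *\<^sub>R (x - \<sigma>) \<in> P"
    then have "x = real_of_int k *\<^sub>R ((1 / real_of_int k) *\<^sub>R (x - \<sigma>)) + \<sigma>" by simp
    then show "(real_of_int k, x) \<in> Ccone P \<sigma>" unfolding Ccone_def using h by fastforce
  qed
  then show ?thesis unfolding Cind_def by simp
qed

lemma le_div_pos: "(K::real) > 0 \<Longrightarrow> (c \<le> (1/K) * z) \<longleftrightarrow> (c * K \<le> z)"
  by (simp add: field_simps)

lemma ray_inv:
  assumes "\<forall>(a,c)\<in>T. a \<bullet> u = c" "K0 > 0" "s \<ge> (0::real)"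
  shows "(1 / (K0 + s)) *\<^sub>R (x + s *\<^sub>R u - \<sigma>) \<in> PH T \<longleftrightarrow> (1 / K0) *\<^sub>R (x - \<sigma>) \<in> PH T"
proof -
  have "c \<le> a \<bullet> ((1 / (K0 + s)) *\<^sub>R (x + s *\<^sub>R u - \<sigma>)) \<longleftrightarrow> c \<le> a \<bullet> ((1 / K0) *\<^sub>R (x - \<sigma>))"
    if ac: "(a, c) \<in> T" for a c
  proof -
    have au: "a \<bullet> u = c" using assms(1) ac by auto
    have "c \<le> a \<bullet> ((1 / (K0 + s)) *\<^sub>R (x + s *\<^sub>R u - \<sigma>)) \<longleftrightarrow> c * (K0 + s) \<le> a \<bullet> (x - \<sigma>) + s * c"
      using le_div_pos[of "K0 + s" c "a \<bullet> (x + s *\<^sub>R u - \<sigma>)"] assms(2,3) au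
      by (simp add: inner_diff_right inner_add_right algebra_simps)
    also have "\<dots> \<longleftrightarrow> c * K0 \<le> a \<bullet> (x - \<sigma>)" by (simp add: algebra_simps)
    also have "\<dots> \<longleftrightarrow> c \<le> a \<bullet> ((1 / K0) *\<^sub>R (x - \<sigma>))"
      using le_div_pos[of K0 c "a \<bullet> (x - \<sigma>)"] assms(2) by simp
    finally show ?thesis .
  qed
  then show ?thesis unfolding PH_def by auto
qed

lemma poly_zero_tail:
  fixes P :: "complex poly"
  assumes "\<forall>j\<ge>J. poly P (of_nat j) = 0"
  shows "P = 0"
proof (rule ccontr)
  assume "P \<noteq> 0"
  then have fin: "finite {z. poly P z = 0}" by (rule poly_roots_finite)
  have "of_nat ` {J..} \<subseteq> {z. poly P z = (0::complex)}" using assms by auto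
  then have "finite (of_nat ` {J..} :: complex set)" using fin finite_subset by blast
  moreover have "inj_on (of_nat :: nat \<Rightarrow> complex) {J..}" by (auto intro: inj_onI)
  ultimately have "finite {J..}" using finite_imageD by blast
  then show False using infinite_Ici by blast
qed

lemma vanish:
  fixes E :: "'i set" and PP :: "'i \<Rightarrow> 'v::euclidean_space set" and S :: "'i \<Rightarrow> 'v"
    and Q :: "'i \<Rightarrow> int \<Rightarrow> 'v \<Rightarrow> complex"
  assumes L: "full_rank_lattice L" and fin: "finite E"
    and qp: "\<forall>e\<in>E. quasi_poly L (Q e)"
    and tr: "\<forall>e\<in>E. \<exists>T. finite T \<and> (\<forall>(a,c)\<in>T. rational_functional L a \<and> c \<in> \<rat> \<and> a \<bullet> v = c) \<and> PP e = PH T"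
    and B: "open B" "v \<in> B"
    and van: "\<forall>k. \<forall>x\<in>L. k > N \<and> (1 / real_of_int k) *\<^sub>R x \<in> B \<longrightarrow>
                 (\<Sum>e\<in>E. Q e k x * Cind (PP e) (S e) k x) = 0"
  shows "\<forall>k. \<forall>x\<in>L. (\<Sum>e\<in>E. Q e k x * Cind (PP e) (S e) k x) = 0"
proof (intro allI ballI)
  fix k and x assume xL: "x \<in> L"
  show "(\<Sum>e\<in>E. Q e k x * Cind (PP e) (S e) k x) = 0"
  proof (cases "k > 0")
    case False
    then show ?thesis by (simp add: Cind_char)
  next
    case kpos: True
    obtain TT where TT: "\<forall>e\<in>E. finite (TT e) \<and> (\<forall>(a,c)\<in>TT e. rational_functional L a \<and> c \<in> \<rat> \<and> a \<bullet> v = c) \<and> PP e = PH (TT e)"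
      using bchoice[OF tr] by blast
    define F where "F = (\<Union>e\<in>E. TT e)"
    have Ffin: "finite F" unfolding F_def using fin TT by auto
    have Frat: "\<forall>(a,c)\<in>F. rational_functional L a \<and> c \<in> \<rat>" unfolding F_def using TT by fastforce
    have Fv: "\<forall>(a,c)\<in>F. a \<bullet> v = c" unfolding F_def using TT by fastforce
    obtain r where r: "r > 0" "ball v r \<subseteq> B" using B open_contains_ball by blast
    obtain u where uL: "u \<in> rat_lattice L" and uv: "dist u v < r / 2" and uF: "\<forall>(a,c)\<in>F. a \<bullet> u = c"
    proof -
      have "r / 2 > 0" using r(1) by simp
      then show ?thesis using rat_affine_dense[OF L Ffin Frat] Fv that by blast
    qed
    obtain n0 :: nat where n0: "n0 > 0" "real n0 *\<^sub>R u \<in> L" using uL unfolding rat_lattice_def by blast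
    obtain g where g: "\<forall>e\<in>E. g e \<in> qpoly_gen L \<and> (\<forall>k. \<forall>x\<in>L. Q e k x = g e k x)"
    proof -
      have "\<forall>e\<in>E. \<exists>g. g \<in> qpoly_gen L \<and> (\<forall>k. \<forall>x\<in>L. Q e k x = g k x)"
        using qp unfolding quasi_poly_def by blast
      then show ?thesis using bchoice[of E "\<lambda>e g. g \<in> qpoly_gen L \<and> (\<forall>k. \<forall>x\<in>L. Q e k x = g k x)"] that by blast
    qed
    have exN: "\<forall>e\<in>E. \<exists>N>0. \<forall>m y0 k x. y0 \<in> L \<longrightarrow> x \<in> L \<longrightarrow>
     (\<exists>p. \<forall>j::nat. g e (k + int j * (N*m)) (x + real_of_int (int j * N) *\<^sub>R y0) = poly p (of_nat j))"
      using qp_ray[OF L] g by blast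
    obtain NN where NN: "\<forall>e\<in>E. NN e > 0 \<and> (\<forall>m y0 k x. y0 \<in> L \<longrightarrow> x \<in> L \<longrightarrow>
     (\<exists>p. \<forall>j::nat. g e (k + int j * (NN e*m)) (x + real_of_int (int j * NN e) *\<^sub>R y0) = poly p (of_nat j)))"
      using bchoice[OF exN] by blast
    define N' where "N' = (\<Prod>e\<in>E. NN e)"
    have N'pos: "N' > 0" unfolding N'_def using NN by (intro prod_pos) auto
    define M where "M = N' * int n0"
    have Mpos: "M > 0" unfolding M_def using N'pos n0 by simp
    define Kj where "Kj j = k + int j * M" for j :: nat
    define Xj where "Xj j = x + real_of_int (int j * M) *\<^sub>R u" for j :: nat
    have XjL: "Xj j \<in> L" for j
    proof -
      have "real_of_int (int j * M) *\<^sub>R u = real_of_int (int j * N') *\<^sub>R (real n0 *\<^sub>R u)"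
        unfolding M_def by simp
      moreover have "x + real_of_int (int j * N') *\<^sub>R (real n0 *\<^sub>R u) \<in> L"
        by (rule frl_add[OF L xL frl_scale[OF L n0(2)]])
      ultimately show ?thesis unfolding Xj_def by (simp only:)
    qed
    have Kjpos: "Kj j > 0" for j unfolding Kj_def using kpos Mpos by (simp add: add_pos_nonneg)
    have exP: "\<forall>e\<in>E. \<exists>p. \<forall>j. Q e (Kj j) (Xj j) = poly p (of_nat j)"
    proof
      fix e assume e: "e \<in> E"
      have "NN e dvd N'" unfolding N'_def using fin e by (rule dvd_prodI)
      then obtain me where me: "N' = NN e * me" by (elim dvdE)
      have y0L: "real_of_int me *\<^sub>R (real n0 *\<^sub>R u) \<in> L" by (rule frl_scale[OF L n0(2)])
      obtain p where p: "\<forall>j::nat. g e (k + int j * (NN e * (me * int n0)))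
          (x + real_of_int (int j * NN e) *\<^sub>R (real_of_int me *\<^sub>R (real n0 *\<^sub>R u))) = poly p (of_nat j)"
        using NN e y0L xL by blast
      have "Q e (Kj j) (Xj j) = poly p (of_nat j)" for j
      proof -
        have e1: "k + int j * (NN e * (me * int n0)) = Kj j" unfolding Kj_def M_def me by (simp add: algebra_simps)
        have e2: "x + real_of_int (int j * NN e) *\<^sub>R (real_of_int me *\<^sub>R (real n0 *\<^sub>R u)) = Xj j"
          unfolding Xj_def M_def me by (simp add: algebra_simps)
        have "Q e (Kj j) (Xj j) = g e (Kj j) (Xj j)" using g e XjL by blast
        then show ?thesis using p[rule_format, of j, unfolded e1 e2] by simp
      qed
      then show "\<exists>p. \<forall>j. Q e (Kj j) (Xj j) = poly p (of_nat j)" by blast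
    qed
    obtain pp where pp: "\<forall>e\<in>E. \<forall>j. Q e (Kj j) (Xj j) = poly (pp e) (of_nat j)"
      using bchoice[OF exP] by blast
    have Cconst: "Cind (PP e) (S e) (Kj j) (Xj j) = Cind (PP e) (S e) k x" if e: "e \<in> E" for e j
    proof -
      have TTu: "\<forall>(a,c)\<in>TT e. a \<bullet> u = c" using uF e unfolding F_def by fastforce
      have "(1 / real_of_int (Kj j)) *\<^sub>R (Xj j - S e) =
            (1 / (real_of_int k + real_of_int (int j * M))) *\<^sub>R (x + real_of_int (int j * M) *\<^sub>R u - S e)"
        unfolding Kj_def Xj_def by simp
      moreover have "real_of_int (int j * M) \<ge> 0" using Mpos by simp
      ultimately have "(1 / real_of_int (Kj j)) *\<^sub>R (Xj j - S e) \<in> PH (TT e) \<longleftrightarrow>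
                       (1 / real_of_int k) *\<^sub>R (x - S e) \<in> PH (TT e)"
        using ray_inv[OF TTu, of "real_of_int k" "real_of_int (int j * M)" x "S e"] kpos by simp
      then show ?thesis using TT e Kjpos[of j] kpos unfolding Cind_char by simp
    qed
    define P where "P = (\<Sum>e\<in>E. smult (Cind (PP e) (S e) k x) (pp e))"
    have sumP: "(\<Sum>e\<in>E. Q e (Kj j) (Xj j) * Cind (PP e) (S e) (Kj j) (Xj j)) = poly P (of_nat j)" for j
      unfolding P_def poly_sum poly_smult using pp Cconst by (intro sum.cong) auto
    obtain J :: nat where J: "real J > max (real_of_int N) (2 * norm (x - real_of_int k *\<^sub>R u) / r)"
      using reals_Archimedean2 by blast
    have "poly P (of_nat j) = 0" if j: "j \<ge> J" for j
    proof -
      have KJ: "real_of_int (Kj j) \<ge> real j"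
      proof -
        have "int j * 1 \<le> int j * M" using Mpos by (intro mult_left_mono) auto
        then show ?thesis unfolding Kj_def using kpos by linarith
      qed
      have Kbig: "real_of_int (Kj j) > max (real_of_int N) (2 * norm (x - real_of_int k *\<^sub>R u) / r)"
      proof -
        have "real J \<le> real j" using j by simp
        then show ?thesis using J KJ by linarith
      qed
      then have KN: "Kj j > N" by simp
      have Kj_pos: "real_of_int (Kj j) > 0" using Kjpos[of j] by simp
      have eqd: "(1 / real_of_int (Kj j)) *\<^sub>R Xj j - u = (1 / real_of_int (Kj j)) *\<^sub>R (x - real_of_int k *\<^sub>R u)"
      proof -
        have hK: "real_of_int (Kj j) *\<^sub>R u = real_of_int k *\<^sub>R u + real_of_int (int j * M) *\<^sub>R u"
          unfolding Kj_def by (simp add: scaleR_add_left)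
        have "u = (1 / real_of_int (Kj j)) *\<^sub>R (real_of_int (Kj j) *\<^sub>R u)"
          using Kj_pos by simp
        also have "\<dots> = (1 / real_of_int (Kj j)) *\<^sub>R (real_of_int k *\<^sub>R u + real_of_int (int j * M) *\<^sub>R u)"
          by (simp only: hK)
        finally have "u = (1 / real_of_int (Kj j)) *\<^sub>R (real_of_int k *\<^sub>R u + real_of_int (int j * M) *\<^sub>R u)" .
        then show ?thesis unfolding Xj_def by (simp add: algebra_simps scaleR_diff_right)
      qed
      have "dist ((1 / real_of_int (Kj j)) *\<^sub>R Xj j) u = norm (x - real_of_int k *\<^sub>R u) / real_of_int (Kj j)"
        unfolding dist_norm eqd using Kj_pos by simp
      also have "\<dots> < r / 2"
      proof -
        have "2 * norm (x - real_of_int k *\<^sub>R u) / r < real_of_int (Kj j)" using Kbig by simp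
        then have "2 * norm (x - real_of_int k *\<^sub>R u) < real_of_int (Kj j) * r" using r(1) by (simp add: field_simps)
        then show ?thesis using Kj_pos by (simp add: field_simps)
      qed
      finally have A: "dist ((1 / real_of_int (Kj j)) *\<^sub>R Xj j) u < r / 2" .
      have "dist ((1 / real_of_int (Kj j)) *\<^sub>R Xj j) v < r"
        using dist_triangle[of "(1 / real_of_int (Kj j)) *\<^sub>R Xj j" v u] A uv by linarith
      then have "(1 / real_of_int (Kj j)) *\<^sub>R Xj j \<in> B" using r(2) by (auto simp: dist_commute)
      then have "(\<Sum>e\<in>E. Q e (Kj j) (Xj j) * Cind (PP e) (S e) (Kj j) (Xj j)) = 0"
        using van XjL KN by blast
      then show ?thesis using sumP by simp
    qed
    then have "P = 0" by (intro poly_zero_tail[of J]) auto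
    then have "(\<Sum>e\<in>E. Q e (Kj 0) (Xj 0) * Cind (PP e) (S e) (Kj 0) (Xj 0)) = 0" using sumP[of 0] by simp
    moreover have "Kj 0 = k" "Xj 0 = x" unfolding Kj_def Xj_def by simp_all
    ultimately show ?thesis by simp
  qed
qed

lemma qp_add: "quasi_poly L f \<Longrightarrow> quasi_poly L g \<Longrightarrow> quasi_poly L (\<lambda>k x. f k x + g k x)"
  unfolding quasi_poly_def
proof -
  assume "\<exists>g\<in>qpoly_gen L. \<forall>k. \<forall>x\<in>L. f k x = g k x" "\<exists>ga\<in>qpoly_gen L. \<forall>k. \<forall>x\<in>L. g k x = ga k x"
  then obtain f1 g1 where "f1 \<in> qpoly_gen L" "g1 \<in> qpoly_gen L" "\<forall>k. \<forall>x\<in>L. f k x = f1 k x" "\<forall>k. \<forall>x\<in>L. g k x = g1 k x"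
    by blast
  then show "\<exists>ga\<in>qpoly_gen L. \<forall>k. \<forall>x\<in>L. f k x + g k x = ga k x"
    by (intro bexI[of _ "\<lambda>k x. f1 k x + g1 k x"]) (auto intro: qpoly_gen.add)
qed

lemma qp_const: "quasi_poly L (\<lambda>k x. c)"
  unfolding quasi_poly_def by (intro bexI[of _ "\<lambda>k x. c"]) (auto intro: qpoly_gen.const)

lemma qp_neg: "quasi_poly L f \<Longrightarrow> quasi_poly L (\<lambda>k x. - f k x)"
  unfolding quasi_poly_def
proof -
  assume "\<exists>g\<in>qpoly_gen L. \<forall>k. \<forall>x\<in>L. f k x = g k x"
  then obtain f1 where f1: "f1 \<in> qpoly_gen L" "\<forall>k. \<forall>x\<in>L. f k x = f1 k x" by blast
  have "(\<lambda>k x. (\<lambda>k x. - 1) k x * f1 k x) \<in> qpoly_gen L" by (intro qpoly_gen.mult qpoly_gen.const f1(1))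
  then show "\<exists>g\<in>qpoly_gen L. \<forall>k. \<forall>x\<in>L. - f k x = g k x"
    using f1(2) by (intro bexI[of _ "\<lambda>k x. - 1 * f1 k x"]) auto
qed

lemma qp_sum: "finite S \<Longrightarrow> \<forall>s\<in>S. quasi_poly L (f s) \<Longrightarrow> quasi_poly L (\<lambda>k x. \<Sum>s\<in>S. f s k x)"
proof (induction S rule: finite_induct)
  case empty
  then show ?case using qp_const[of L 0] by simp
next
  case (insert s S)
  then show ?case using qp_add[of L "f s" "\<lambda>k x. \<Sum>s\<in>S. f s k x"] by simp
qed

lemma Cind_empty: "Cind {} \<sigma> k x = 0" by (simp add: Cind_char)

lemma decomp_tangent:
  assumes "rational_polyhedron L P" "v \<in> P"
  shows "\<exists>T. finite T \<and> (\<forall>(a,c)\<in>T. rational_functional L a \<and> c \<in> \<rat> \<and> a \<bullet> v = c) \<and>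
             tangent_cone P v = PH T \<and> (\<exists>r>0. \<forall>y. dist y v < r \<longrightarrow> (y \<in> P \<longleftrightarrow> y \<in> tangent_cone P v))"
proof -
  obtain H where H: "finite H" "\<forall>(a,c)\<in>H. rational_functional L a \<and> c \<in> \<rat>" "P = PH H"
    using assms(1) by (rule ratpoly_PH)
  have vP: "v \<in> PH H" using assms(2) H(3) by simp
  have te: "tangent_cone P v = PH (tight H v)" using tangent_eq[OF H(1) vP] unfolding H(3) .
  obtain r where r: "r > 0" "\<forall>y. dist y v < r \<longrightarrow> (y \<in> PH H \<longleftrightarrow> y \<in> PH (tight H v))"
    using local_agree[OF H(1) vP] by blast
  have rt: "\<forall>(a,c)\<in>tight H v. rational_functional L a \<and> c \<in> \<rat> \<and> a \<bullet> v = c"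
    using H(2) unfolding tight_def by auto
  have X: "\<exists>r>0. \<forall>y. dist y v < r \<longrightarrow> (y \<in> P \<longleftrightarrow> y \<in> tangent_cone P v)"
  proof -
    have "\<forall>y. dist y v < r \<longrightarrow> (y \<in> P \<longleftrightarrow> y \<in> tangent_cone P v)" using r(2) unfolding H(3) tangent_eq[OF H(1) vP] .
    then show ?thesis using r(1) by (intro exI[of _ r] conjI)
  qed
  show ?thesis
    apply (rule exI[of _ "tight H v"])
    apply (intro conjI)
       apply (rule finite_tight[OF H(1)])
      apply (rule rt)
     apply (rule te)
    apply (rule X)
    done
qed

lemma near_equal:
  assumes "rational_polyhedron L P"
  shows "\<exists>r>0. \<forall>y. dist y v < r \<longrightarrow> (y \<in> P \<longleftrightarrow> y \<in> tangent_cone P v)"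
proof (cases "v \<in> P")
  case True
  have "finite T \<and> (\<forall>(a,c)\<in>T. rational_functional L a \<and> c \<in> \<rat> \<and> a \<bullet> v = c) \<and>
             tangent_cone P v = PH T \<and> (\<exists>r>0. \<forall>y. dist y v < r \<longrightarrow> (y \<in> P \<longleftrightarrow> y \<in> tangent_cone P v))
     \<Longrightarrow> ?thesis" for T by (elim conjE)
  then show ?thesis using decomp_tangent[OF assms True] by (elim exE)
next
  case False
  obtain H where H: "finite H" "\<forall>(a,c)\<in>H. rational_functional L a \<and> c \<in> \<rat>" "P = PH H"
    using assms(1) by (rule ratpoly_PH)
  have "v \<notin> PH H" using False H(3) by simp
  then obtain r where r: "r > 0" "\<forall>y. dist y v < r \<longrightarrow> y \<notin> PH H"
    using outside[OF H(1)] by blast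
  have tc: "tangent_cone P v = {}" using False unfolding tangent_cone_def by simp
  have "\<forall>y. dist y v < r \<longrightarrow> (y \<in> P \<longleftrightarrow> y \<in> tangent_cone P v)"
    unfolding tc using r(2) H(3) by simp
  then show ?thesis using r(1) by (intro exI[of _ r] conjI)
qed

lemma agree:
  assumes dec: "is_decomp L D q m"
  shows "agrees_near L v m (Tv D q v) \<and> finite {d\<in>D. v \<in> fst d}"
proof -
  have rp: "\<forall>d\<in>D. rational_polyhedron L (fst d)" using dec unfolding is_decomp_def by blast
  have lf: "locally_finite_fam D" using dec unfolding is_decomp_def by blast
  have meq: "\<forall>k. \<forall>x\<in>L. m k x =
        (\<Sum>d\<in>{d\<in>D. Cind (fst d) (snd d) k x \<noteq> 0}. q d k x * Cind (fst d) (snd d) k x)"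
    using dec unfolding is_decomp_def by blast
  obtain U where U: "open U" "v \<in> U" "finite {d\<in>D. seg_sum (fst d) (snd d) \<inter> U \<noteq> {}}"
    using lf unfolding locally_finite_fam_def by blast
  define DU where "DU = {d\<in>D. seg_sum (fst d) (snd d) \<inter> U \<noteq> {}}"
  have DUfin: "finite DU" using U(3) unfolding DU_def .
  have seg0: "v \<in> seg_sum P \<sigma>" if "v \<in> P" for P \<sigma>
    unfolding seg_sum_def using that by (intro CollectI exI[of _ v] exI[of _ 0]) auto
  have D0DU: "{d\<in>D. v \<in> fst d} \<subseteq> DU" unfolding DU_def using seg0 U(2) by blast
  have D0fin: "finite {d\<in>D. v \<in> fst d}" using finite_subset[OF D0DU DUfin] .
  obtain r0 where r0: "r0 > 0" "\<forall>d\<in>DU. \<forall>y. dist y v < r0 \<longrightarrow> (y \<in> fst d \<longleftrightarrow> y \<in> tangent_cone (fst d) v)"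
  proof -
    have "\<exists>r>0. \<forall>d\<in>DU. (\<lambda>d r. \<forall>y. dist y v < r \<longrightarrow> (y \<in> fst d \<longleftrightarrow> y \<in> tangent_cone (fst d) v)) d r"
    proof (rule finite_min[OF DUfin])
      show "\<forall>d\<in>DU. \<exists>r>0. \<forall>y. dist y v < r \<longrightarrow> (y \<in> fst d \<longleftrightarrow> y \<in> tangent_cone (fst d) v)"
      proof
        fix d assume "d \<in> DU"
        then have "rational_polyhedron L (fst d)" using rp unfolding DU_def by blast
        then show "\<exists>r>0. \<forall>y. dist y v < r \<longrightarrow> (y \<in> fst d \<longleftrightarrow> y \<in> tangent_cone (fst d) v)"
          by (rule near_equal)
      qed
    qed auto
    then show ?thesis using that by blast
  qed
  obtain r1 where r1: "r1 > 0" "ball v r1 \<subseteq> U" using U(1,2) open_contains_ball by blast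
  define r where "r = min r0 r1"
  have r: "r > 0" "r \<le> r0" "r \<le> r1" unfolding r_def using r0 r1 by auto
  define S0 where "S0 = Max (insert 0 ((\<lambda>d. norm (snd d)) ` DU))"
  have S0: "S0 \<ge> 0" "\<forall>d\<in>DU. norm (snd d) \<le> S0" unfolding S0_def using DUfin by auto
  define N :: int where "N = \<lceil>2 * S0 / r\<rceil> + 1"
  have Npos: "N > 0"
  proof -
    have "2 * S0 / r \<ge> 0" using S0 r by simp
    then have "\<lceil>2 * S0 / r\<rceil> \<ge> 0" by simp
    then show ?thesis unfolding N_def by simp
  qed
  define B where "B = ball v (r / 2)"
  have "\<forall>k. \<forall>x\<in>L. k > N \<and> (1 / real_of_int k) *\<^sub>R x \<in> B \<longrightarrow> Tv D q v k x = m k x"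
  proof (intro allI ballI impI)
    fix k x assume xL: "x \<in> L" and h: "k > N \<and> (1 / real_of_int k) *\<^sub>R x \<in> B"
    have kpos: "k > 0" using h Npos by simp
    have kbig: "real_of_int k > 2 * S0 / r"
    proof -
      have "real_of_int N > 2 * S0 / r" unfolding N_def by linarith
      then show ?thesis using h by linarith
    qed
    have k1: "real_of_int k \<ge> 1" using kpos by simp
    have xB: "dist ((1 / real_of_int k) *\<^sub>R x) v < r / 2" using h unfolding B_def by (simp add: dist_commute)
    have near: "dist ((1 / real_of_int k) *\<^sub>R (x - snd d)) v < r" if d: "d \<in> DU" for d
    proof -
      have "norm ((1 / real_of_int k) *\<^sub>R snd d) = norm (snd d) / real_of_int k" using kpos by simp
      also have "\<dots> \<le> S0 / real_of_int k" using S0(2) d kpos by (simp add: divide_right_mono)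
      also have "\<dots> \<le> r / 2"
      proof -
        have "2 * S0 < real_of_int k * r" using kbig r(1) by (simp add: field_simps)
        then show ?thesis using kpos by (simp add: field_simps)
      qed
      finally have ns: "norm ((1 / real_of_int k) *\<^sub>R snd d) \<le> r / 2" .
      have "(1 / real_of_int k) *\<^sub>R (x - snd d) = (1 / real_of_int k) *\<^sub>R x - (1 / real_of_int k) *\<^sub>R snd d"
        by (simp add: scaleR_diff_right)
      have "dist ((1 / real_of_int k) *\<^sub>R (x - snd d)) v \<le> dist ((1 / real_of_int k) *\<^sub>R x) v + norm ((1 / real_of_int k) *\<^sub>R snd d)"
      proof -
        have "(1 / real_of_int k) *\<^sub>R x - (1 / real_of_int k) *\<^sub>R snd d - v = ((1 / real_of_int k) *\<^sub>R x - v) - (1 / real_of_int k) *\<^sub>R snd d"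
          by simp
        then have "norm ((1 / real_of_int k) *\<^sub>R x - (1 / real_of_int k) *\<^sub>R snd d - v) \<le> norm ((1 / real_of_int k) *\<^sub>R x - v) + norm ((1 / real_of_int k) *\<^sub>R snd d)"
          using norm_triangle_ineq4 by metis
        then show ?thesis using \<open>(1 / real_of_int k) *\<^sub>R (x - snd d) = _\<close> by (simp add: dist_norm)
      qed
      then show ?thesis using xB ns by linarith
    qed
    have CDU: "{d\<in>D. Cind (fst d) (snd d) k x \<noteq> 0} \<subseteq> DU"
    proof
      fix d assume d: "d \<in> {d\<in>D. Cind (fst d) (snd d) k x \<noteq> 0}"
      then have yP: "(1 / real_of_int k) *\<^sub>R (x - snd d) \<in> fst d" by (simp add: Cind_char split: if_splits)
      have "(1 / real_of_int k) *\<^sub>R x = (1 / real_of_int k) *\<^sub>R (x - snd d) + (1 / real_of_int k) *\<^sub>R snd d"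
        by (simp add: scaleR_diff_right)
      then have "(1 / real_of_int k) *\<^sub>R x \<in> seg_sum (fst d) (snd d)" unfolding seg_sum_def using yP k1
        by (intro CollectI exI[of _ "(1 / real_of_int k) *\<^sub>R (x - snd d)"] exI[of _ "1 / real_of_int k"]) auto
      moreover have "(1 / real_of_int k) *\<^sub>R x \<in> U" using xB r r1(2) by (auto simp: dist_commute)
      ultimately show "d \<in> DU" using d unfolding DU_def by blast
    qed
    have eqC: "Cind (fst d) (snd d) k x = Cind (tangent_cone (fst d) v) (snd d) k x" if d: "d \<in> DU" for d
    proof -
      have "dist ((1 / real_of_int k) *\<^sub>R (x - snd d)) v < r0" using near[OF d] r(2) by linarith
      then have "(1 / real_of_int k) *\<^sub>R (x - snd d) \<in> fst d \<longleftrightarrow> (1 / real_of_int k) *\<^sub>R (x - snd d) \<in> tangent_cone (fst d) v"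
        using r0(2) d by blast
      then show ?thesis unfolding Cind_char by simp
    qed
    have "m k x = (\<Sum>d\<in>DU. q d k x * Cind (fst d) (snd d) k x)"
      unfolding meq[rule_format, OF xL] by (rule sum.mono_neutral_left[OF DUfin CDU]) (auto simp: DU_def)
    also have "\<dots> = (\<Sum>d\<in>DU. q d k x * Cind (tangent_cone (fst d) v) (snd d) k x)"
      using eqC by simp
    also have "\<dots> = Tv D q v k x"
      unfolding Tv_def
    proof (rule sum.mono_neutral_right[OF DUfin D0DU])
      show "\<forall>i\<in>DU - {d \<in> D. v \<in> fst d}. q i k x * Cind (tangent_cone (fst i) v) (snd i) k x = 0"
        unfolding DU_def tangent_cone_def by (auto simp: Cind_empty)
    qed
    finally show "Tv D q v k x = m k x" by simp
  qed
  then have "agrees_near L v m (Tv D q v)" unfolding agrees_near_def B_def using Npos r(1)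
    by (intro exI[of _ "ball v (r/2)"] exI[of _ N]) auto
  then show ?thesis using D0fin by blast
qed

lemma inSv_Tv:
  assumes dec: "is_decomp L D q m"
  shows "in_Sv L v (Tv D q v)"
proof -
  have hyp: "\<forall>d\<in>D. rational_polyhedron L (fst d) \<and> snd d \<in> rat_lattice L \<and> quasi_poly L (q d)"
    using dec unfolding is_decomp_def by blast
  define D0 where "D0 = {d\<in>D. v \<in> fst d}"
  have D0fin: "finite D0" using agree[OF dec] unfolding D0_def by blast
  define \<phi> where "\<phi> d = (tangent_cone (fst d) v, snd d)" for d :: "'a set \<times> 'a"
  define D1 where "D1 = \<phi> ` D0"
  define q1 where "q1 d1 = (\<lambda>k x. \<Sum>d\<in>{d\<in>D0. \<phi> d = d1}. q d k x)" for d1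
  have D1fin: "finite D1" unfolding D1_def using D0fin by simp
  have tanrep: "\<exists>T. finite T \<and> (\<forall>(a,c)\<in>T. rational_functional L a \<and> c \<in> \<rat> \<and> a \<bullet> v = c) \<and> fst d1 = PH T"
    if d1: "d1 \<in> D1" for d1
  proof -
    obtain d where d: "d \<in> D0" "d1 = \<phi> d" using d1 unfolding D1_def by blast
    have "rational_polyhedron L (fst d)" "v \<in> fst d" using d(1) hyp unfolding D0_def by auto
    from decomp_tangent[OF this] obtain T where
      "finite T" "\<forall>(a,c)\<in>T. rational_functional L a \<and> c \<in> \<rat> \<and> a \<bullet> v = c" "tangent_cone (fst d) v = PH T"
      by blast
    then show ?thesis using d(2) unfolding \<phi>_def by (intro exI[of _ T]) auto
  qed
  have cone1: "cone_with_apex L (fst d1) v" if d1in: "d1 \<in> D1" for d1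
  proof -
    obtain T where T: "finite T" "\<forall>(a,c)\<in>T. rational_functional L a \<and> c \<in> \<rat> \<and> a \<bullet> v = c" "fst d1 = PH T"
      using tanrep[OF d1in] by blast
    show ?thesis unfolding T(3) by (rule tight_cone[OF T(1,2)])
  qed
  have h1: "\<forall>d1\<in>D1. rational_polyhedron L (fst d1) \<and> snd d1 \<in> rat_lattice L \<and> quasi_poly L (q1 d1)"
  proof
    fix d1 assume d1: "d1 \<in> D1"
    have "rational_polyhedron L (fst d1)" using cone1[OF d1] unfolding cone_with_apex_def by blast
    moreover have "snd d1 \<in> rat_lattice L" using d1 hyp unfolding D1_def D0_def \<phi>_def by auto
    moreover have "quasi_poly L (q1 d1)" unfolding q1_def
    proof (rule qp_sum)
      show "finite {d\<in>D0. \<phi> d = d1}" using D0fin by simp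
      show "\<forall>s\<in>{d\<in>D0. \<phi> d = d1}. quasi_poly L (q s)" using hyp unfolding D0_def by auto
    qed
    ultimately show "rational_polyhedron L (fst d1) \<and> snd d1 \<in> rat_lattice L \<and> quasi_poly L (q1 d1)" by blast
  qed
  have h2: "locally_finite_fam D1" unfolding locally_finite_fam_def
    using D1fin by (intro allI exI[of _ UNIV]) auto
  have h3: "\<forall>k. \<forall>x\<in>L. Tv D q v k x =
        (\<Sum>d1\<in>{d1\<in>D1. Cind (fst d1) (snd d1) k x \<noteq> 0}. q1 d1 k x * Cind (fst d1) (snd d1) k x)"
  proof (intro allI ballI)
    fix k x
    have "Tv D q v k x = (\<Sum>d\<in>D0. q d k x * Cind (fst (\<phi> d)) (snd (\<phi> d)) k x)"
      unfolding Tv_def D0_def \<phi>_def by simp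
    also have "\<dots> = (\<Sum>d1\<in>\<phi> ` D0. \<Sum>d\<in>{d\<in>D0. \<phi> d = d1}. q d k x * Cind (fst (\<phi> d)) (snd (\<phi> d)) k x)"
      by (rule sum.image_gen[OF D0fin])
    also have "\<dots> = (\<Sum>d1\<in>D1. q1 d1 k x * Cind (fst d1) (snd d1) k x)"
      unfolding D1_def q1_def
    proof (rule sum.cong[OF refl])
      fix d1 assume "d1 \<in> \<phi> ` D0"
      have "(\<Sum>d\<in>{d\<in>D0. \<phi> d = d1}. q d k x * Cind (fst (\<phi> d)) (snd (\<phi> d)) k x) =
            (\<Sum>d\<in>{d\<in>D0. \<phi> d = d1}. q d k x * Cind (fst d1) (snd d1) k x)"
        by (rule sum.cong) auto
      also have "\<dots> = (\<Sum>d\<in>{d\<in>D0. \<phi> d = d1}. q d k x) * Cind (fst d1) (snd d1) k x"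
        by (simp add: sum_distrib_right)
      finally show "(\<Sum>d\<in>{d\<in>D0. \<phi> d = d1}. q d k x * Cind (fst (\<phi> d)) (snd (\<phi> d)) k x) =
            (\<lambda>k x. \<Sum>d\<in>{d\<in>D0. \<phi> d = d1}. q d k x) k x * Cind (fst d1) (snd d1) k x" by simp
    qed
    also have "\<dots> = (\<Sum>d1\<in>{d1\<in>D1. Cind (fst d1) (snd d1) k x \<noteq> 0}. q1 d1 k x * Cind (fst d1) (snd d1) k x)"
      by (rule sum.mono_neutral_right[OF D1fin]) auto
    finally show "Tv D q v k x =
        (\<Sum>d1\<in>{d1\<in>D1. Cind (fst d1) (snd d1) k x \<noteq> 0}. q1 d1 k x * Cind (fst d1) (snd d1) k x)" .
  qed
  have "is_decomp L D1 q1 (Tv D q v)" unfolding is_decomp_def using h1 h2 h3 by blast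
  then show ?thesis unfolding in_Sv_def using D1fin cone1 by blast
qed

lemma unique:
  assumes L: "full_rank_lattice L" and dec: "is_decomp L D q m"
    and sv: "in_Sv L v m'" and ag: "agrees_near L v m m'"
  shows "\<forall>k. \<forall>x\<in>L. m' k x = Tv D q v k x"
proof -
  obtain D' q' where fin': "finite D'" and dec': "is_decomp L D' q' m'"
    and cw: "\<forall>d\<in>D'. cone_with_apex L (fst d) v"
    using sv unfolding in_Sv_def by blast
  obtain B1 N1 where B1: "open B1" "v \<in> B1" "N1 > 0"
    "\<forall>k. \<forall>x\<in>L. k > N1 \<and> (1 / real_of_int k) *\<^sub>R x \<in> B1 \<longrightarrow> m' k x = m k x"
    using ag unfolding agrees_near_def by blast
  have agr: "agrees_near L v m (Tv D q v)" and D0fin: "finite {d\<in>D. v \<in> fst d}"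
    using agree[OF dec] by auto
  obtain B2 N2 where B2: "open B2" "v \<in> B2" "N2 > 0"
    "\<forall>k. \<forall>x\<in>L. k > N2 \<and> (1 / real_of_int k) *\<^sub>R x \<in> B2 \<longrightarrow> Tv D q v k x = m k x"
    using agr unfolding agrees_near_def by blast
  define D0 where "D0 = {d\<in>D. v \<in> fst d}"
  have hyp: "\<forall>d\<in>D. rational_polyhedron L (fst d) \<and> snd d \<in> rat_lattice L \<and> quasi_poly L (q d)"
    using dec unfolding is_decomp_def by blast
  have hyp': "\<forall>d\<in>D'. quasi_poly L (q' d)"
    using dec' unfolding is_decomp_def by blast
  have meq': "\<forall>k. \<forall>x\<in>L. m' k x =
        (\<Sum>d\<in>{d\<in>D'. Cind (fst d) (snd d) k x \<noteq> 0}. q' d k x * Cind (fst d) (snd d) k x)"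
    using dec' unfolding is_decomp_def by blast
  define E where "E = Inl ` D' \<union> Inr ` D0"
  define PP where "PP = case_sum (\<lambda>d::'a set \<times> 'a. fst d) (\<lambda>d::'a set \<times> 'a. tangent_cone (fst d) v)"
  define S where "S = case_sum (\<lambda>d::'a set \<times> 'a. snd d) (\<lambda>d::'a set \<times> 'a. snd d)"
  define Q where "Q = case_sum q' (\<lambda>d k x. - q d k x)"
  have Efin: "finite E" unfolding E_def using fin' D0fin D0_def by simp
  have sumE: "(\<Sum>e\<in>E. Q e k x * Cind (PP e) (S e) k x) = m' k x - Tv D q v k x" if xL: "x \<in> L" for k x
  proof -
    have disj: "Inl ` D' \<inter> Inr ` D0 = {}" by auto
    have "(\<Sum>e\<in>E. Q e k x * Cind (PP e) (S e) k x) =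
          (\<Sum>e\<in>Inl ` D'. Q e k x * Cind (PP e) (S e) k x) + (\<Sum>e\<in>Inr ` D0. Q e k x * Cind (PP e) (S e) k x)"
      unfolding E_def using fin' D0fin D0_def disj by (intro sum.union_disjoint) auto
    also have "(\<Sum>e\<in>Inl ` D'. Q e k x * Cind (PP e) (S e) k x) = (\<Sum>d\<in>D'. q' d k x * Cind (fst d) (snd d) k x)"
      by (subst sum.reindex) (auto simp: Q_def PP_def S_def)
    also have "\<dots> = m' k x"
      unfolding meq'[rule_format, OF xL] by (rule sum.mono_neutral_right[OF fin']) auto
    also have "(\<Sum>e\<in>Inr ` D0. Q e k x * Cind (PP e) (S e) k x) = (\<Sum>d\<in>D0. - (q d k x * Cind (tangent_cone (fst d) v) (snd d) k x))"
      by (subst sum.reindex) (auto simp: Q_def PP_def S_def)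
    also have "\<dots> = - Tv D q v k x" unfolding Tv_def D0_def by (simp add: sum_negf)
    finally show ?thesis by simp
  qed
  have qpE: "\<forall>e\<in>E. quasi_poly L (Q e)"
  proof
    fix e assume e: "e \<in> E"
    then consider d where "d \<in> D'" "e = Inl d" | d where "d \<in> D0" "e = Inr d" unfolding E_def by blast
    then show "quasi_poly L (Q e)"
    proof cases
      case 1
      then show ?thesis using hyp' unfolding Q_def by auto
    next
      case 2
      then have "quasi_poly L (q d)" using hyp unfolding D0_def by auto
      then show ?thesis using 2 qp_neg unfolding Q_def by auto
    qed
  qed
  have trE: "\<forall>e\<in>E. \<exists>T. finite T \<and> (\<forall>(a,c)\<in>T. rational_functional L a \<and> c \<in> \<rat> \<and> a \<bullet> v = c) \<and> PP e = PH T"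
  proof
    fix e assume e: "e \<in> E"
    then consider d where "d \<in> D'" "e = Inl d" | d where "d \<in> D0" "e = Inr d" unfolding E_def by blast
    then show "\<exists>T. finite T \<and> (\<forall>(a,c)\<in>T. rational_functional L a \<and> c \<in> \<rat> \<and> a \<bullet> v = c) \<and> PP e = PH T"
    proof cases
      case 1
      then show ?thesis using cone_tight[of L "fst d" v] cw unfolding PP_def by auto
    next
      case 2
      have "rational_polyhedron L (fst d)" "v \<in> fst d" using 2 hyp unfolding D0_def by auto
      from decomp_tangent[OF this] obtain T where
        "finite T" "\<forall>(a,c)\<in>T. rational_functional L a \<and> c \<in> \<rat> \<and> a \<bullet> v = c" "tangent_cone (fst d) v = PH T"
        by blast
      then show ?thesis using 2 unfolding PP_def by (intro exI[of _ T]) auto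
    qed
  qed
  have van: "\<forall>k. \<forall>x\<in>L. k > max N1 N2 \<and> (1 / real_of_int k) *\<^sub>R x \<in> B1 \<inter> B2 \<longrightarrow>
                 (\<Sum>e\<in>E. Q e k x * Cind (PP e) (S e) k x) = 0"
  proof (intro allI ballI impI)
    fix k x assume xL: "x \<in> L" and h: "k > max N1 N2 \<and> (1 / real_of_int k) *\<^sub>R x \<in> B1 \<inter> B2"
    have "m' k x = m k x" using B1(4) xL h by auto
    moreover have "Tv D q v k x = m k x" using B2(4) xL h by auto
    ultimately show "(\<Sum>e\<in>E. Q e k x * Cind (PP e) (S e) k x) = 0" using sumE[OF xL] by simp
  qed
  have "\<forall>k. \<forall>x\<in>L. (\<Sum>e\<in>E. Q e k x * Cind (PP e) (S e) k x) = 0"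
    by (rule vanish[OF L Efin qpE trE _ _ van]) (use B1 B2 in auto)
  then show ?thesis using sumE by simp
qed

theorem proposition5p5:
  fixes L :: "'v::euclidean_space set" and m :: "int \<Rightarrow> 'v \<Rightarrow> complex" and v :: 'v
    and D :: "('v set \<times> 'v) set" and q :: "'v set \<times> 'v \<Rightarrow> int \<Rightarrow> 'v \<Rightarrow> complex"
  assumes "full_rank_lattice L"
    and "is_decomp L D q m"
  shows "in_Sv L v (Tv D q v) \<and> agrees_near L v m (Tv D q v) \<and>
         (\<forall>m'. in_Sv L v m' \<and> agrees_near L v m m' \<longrightarrow> (\<forall>k. \<forall>x\<in>L. m' k x = Tv D q v k x)) \<and>
         (\<forall>D' q'. is_decomp L D' q' m \<longrightarrow> (\<forall>k. \<forall>x\<in>L. Tv D' q' v k x = Tv D q v k x))"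
proof -
  have c1: "in_Sv L v (Tv D q v)" by (rule inSv_Tv[OF assms(2)])
  have c2: "agrees_near L v m (Tv D q v)" using agree[OF assms(2)] by blast
  have c3: "\<forall>m'. in_Sv L v m' \<and> agrees_near L v m m' \<longrightarrow> (\<forall>k. \<forall>x\<in>L. m' k x = Tv D q v k x)"
    using unique[OF assms] by blast
  have c4: "\<forall>D' q'. is_decomp L D' q' m \<longrightarrow> (\<forall>k. \<forall>x\<in>L. Tv D' q' v k x = Tv D q v k x)"
  proof (rule allI, rule allI, rule impI)
    fix D' q' assume d': "is_decomp L D' q' m"
    show "\<forall>k. \<forall>x\<in>L. Tv D' q' v k x = Tv D q v k x"
    proof -
      have a1: "in_Sv L v (Tv D' q' v)" by (rule inSv_Tv[OF d'])
      have a2: "agrees_near L v m (Tv D' q' v)" using agree[OF d'] by blast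
      show ?thesis by (rule unique[OF assms a1 a2])
    qed
  qed
  show ?thesis using c1 c2 c3 c4 by blast
qed

end
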